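(* Let $n\ge2$ and $0\le\delta<\frac1n$. Let $P^0=[d_1\ \cdots\ d_{n+1}]$ be the canonical uniform simplex in $\mathbb R^{n}$. Define the matrix $P^\delta$ with columns $[P^\delta]_1=d_1$ and $[P^\delta]_i=\alpha(d_i+\delta e_1)$ for $2\le i\le n+1$, where $\alpha=\frac{n}{\sqrt{n^2\delta^2-2n\delta+n^2}}$. Let $\mathcal P^\delta$ be the set of columns of $P^\delta$. Then $\mathcal P^\delta$ is a positive basis of $\mathbb R^n$ with cosine measure $\frac{1-\delta n}{\sqrt{n^2\delta^2-2n\delta+n^2}}$.
   Context: The canonical uniform simplex is the $n\times(n+1)$ matrix $P^0$ defined as follows, with $a_i=\sqrt{\frac{(n-i+1)(n+1)}{n(n-i+2)}}$ for $i=1,\dots,n$: for $1\le j\le n$, column $j$ has entry $-\frac{a_i}{n-i+1}$ in row $i<j$, entry $a_j$ in row $j$, and $0$ in rows $i>j$; column $n+1$ has entry $-\frac{a_i}{n-i+1}$ in every row $i$. $e_1$ is the first standard basis vector. A finite set $\mathcal P$ is a positive basis if its positive span $\{\sum\lambda_id_i:\lambda_i\ge0\}$ is $\mathbb R^n$ and no $d\in\mathcal P$ lies in the positive span of $\mathcal P\setminus\{d\}$. The cosine measure of a finite set $\mathcal S\subset\mathbb R^n\setminus\{\mathbf 0\}$ is $\operatorname{cm}(\mathcal S)=\min_{\|u\|=1}\max_{d\in\mathcal S}\frac{d^\top u}{\|d\|}$. *)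

theory Defs
  imports Complex_Main
begin

text \<open>Vectors of R^n are represented as functions nat => real whose support lies
in the index set {1..n} (rows are indexed 1..n as in the paper).\<close>

definition Rn :: "nat \<Rightarrow> (nat \<Rightarrow> real) set" where
  "Rn n = {x. \<forall>i. i \<notin> {1..n} \<longrightarrow> x i = 0}"

definition vinner :: "nat \<Rightarrow> (nat \<Rightarrow> real) \<Rightarrow> (nat \<Rightarrow> real) \<Rightarrow> real" where
  "vinner n x y = (\<Sum>i=1..n. x i * y i)"

definition vnorm :: "nat \<Rightarrow> (nat \<Rightarrow> real) \<Rightarrow> real" where
  "vnorm n x = sqrt (\<Sum>i=1..n. (x i)^2)"

definition e1 :: "nat \<Rightarrow> real" where
  "e1 i = (if i = 1 then 1 else 0)"

definition pos_span :: "(nat \<Rightarrow> real) set \<Rightarrow> (nat \<Rightarrow> real) set" where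
  "pos_span S = {x. \<exists>l. (\<forall>d\<in>S. l d \<ge> 0) \<and> x = (\<lambda>i. \<Sum>d\<in>S. l d * d i)}"

definition positive_basis :: "nat \<Rightarrow> (nat \<Rightarrow> real) set \<Rightarrow> bool" where
  "positive_basis n S \<longleftrightarrow> finite S \<and> pos_span S = Rn n \<and>
     (\<forall>d\<in>S. d \<notin> pos_span (S - {d}))"

text \<open>Cosine measure: min over unit u of max over d of d^T u / ||d||
  (the minimum is attained, so it equals the infimum).\<close>
definition cosine_measure :: "nat \<Rightarrow> (nat \<Rightarrow> real) set \<Rightarrow> real" where
  "cosine_measure n S =
     Inf ((\<lambda>u. Max ((\<lambda>d. vinner n d u / vnorm n d) ` S)) ` {u \<in> Rn n. vnorm n u = 1})"

definition simplex_a :: "nat \<Rightarrow> nat \<Rightarrow> real" where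
  "simplex_a n i = sqrt ((real n - real i + 1) * (real n + 1) / (real n * (real n - real i + 2)))"

definition P0_col :: "nat \<Rightarrow> nat \<Rightarrow> nat \<Rightarrow> real" where
  "P0_col n j i =
     (if i < 1 \<or> i > n then 0
      else if j = n + 1 then - simplex_a n i / (real n - real i + 1)
      else if i < j then - simplex_a n i / (real n - real i + 1)
      else if i = j then simplex_a n j
      else 0)"

definition Pdelta_alpha :: "nat \<Rightarrow> real \<Rightarrow> real" where
  "Pdelta_alpha n \<delta> = real n / sqrt (real n ^ 2 * \<delta>^2 - 2 * real n * \<delta> + real n ^ 2)"

definition Pdelta_col :: "nat \<Rightarrow> real \<Rightarrow> nat \<Rightarrow> nat \<Rightarrow> real" where
  "Pdelta_col n \<delta> j =
     (if j = 1 then P0_col n 1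
      else (\<lambda>i. Pdelta_alpha n \<delta> * (P0_col n j i + \<delta> * e1 i)))"

end

theory Submission
  imports Defs
begin

definition bb :: "nat \<Rightarrow> nat \<Rightarrow> real" where
  "bb n i = simplex_a n i / (real n - real i + 1)"

lemma a_sq:
  assumes "1 \<le> i" "i \<le> n"
  shows "(simplex_a n i)^2 = (real n - real i + 1) * (real n + 1) / (real n * (real n - real i + 2))"
proof -
  have "real i \<le> real n" using assms by simp
  hence "0 \<le> (real n - real i + 1) * (real n + 1) / (real n * (real n - real i + 2))"
    by (intro divide_nonneg_pos mult_nonneg_nonneg mult_pos_pos) (use assms in auto)
  thus ?thesis unfolding simplex_a_def by simp
qed

lemma a_pos:
  assumes "1 \<le> i" "i \<le> n"
  shows "simplex_a n i > 0"
proof -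
  have "real i \<le> real n" using assms by simp
  hence "0 < (real n - real i + 1) * (real n + 1) / (real n * (real n - real i + 2))"
    by (intro divide_pos_pos mult_pos_pos) (use assms in auto)
  thus ?thesis unfolding simplex_a_def by simp
qed

lemma a_one: assumes "1 \<le> n" shows "simplex_a n 1 = 1"
  using assms unfolding simplex_a_def by simp

lemma bb_sq:
  assumes "1 \<le> i" "i \<le> n"
  shows "(bb n i)^2 = (real n + 1) / real n * (1 / (real n - real i + 1) - 1 / (real n - real i + 2))"
proof -
  define x where "x = real n - real i + 1"
  have x1: "x \<ge> 1" using assms unfolding x_def by simp
  have x2: "real n - real i + 2 = x + 1" unfolding x_def by simp
  have np: "real n > 0" using assms by simp
  have "(bb n i)^2 = (simplex_a n i)^2 / x^2"
    unfolding bb_def x_def by (simp add: power_divide)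
  also have "\<dots> = x * (real n + 1) / (real n * (x + 1)) / x^2"
    using a_sq[OF assms] x2 unfolding x_def by simp
  also have "\<dots> = (real n + 1) / real n * (1 / x - 1 / (x + 1))"
    proof -
    have "x \<noteq> 0" "x + 1 \<noteq> 0" "real n \<noteq> 0" using x1 np by auto
    then have e: "1 / x - 1 / (x + 1) = 1/(x*(x+1))" by (simp add: field_simps)
    have "x * (real n + 1) / (real n * (x + 1)) / x^2 = (real n+1) / (real n * (x*(x+1)))" using \<open>x \<noteq> 0\<close>
      by (simp add: power2_eq_square)
    then show ?thesis using e by simp
  qed
  finally show ?thesis using x2 unfolding x_def by simp
qed

lemma ab: 
  assumes "1 \<le> i" "i \<le> n"
  shows "simplex_a n i * bb n i = (real n + 1) / (real n * (real n - real i + 2))"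
proof -
  define x where "x = real n - real i + 1"
  have x1: "x \<ge> 1" using assms unfolding x_def by simp
  have x2: "real n - real i + 2 = x + 1" unfolding x_def by simp
  have np: "real n > 0" using assms by simp
  have "simplex_a n i * bb n i = (simplex_a n i)^2 / x"
    unfolding bb_def x_def by (simp add: power2_eq_square)
  also have "\<dots> = x * (real n + 1) / (real n * (x + 1)) / x"
    using a_sq[OF assms] x2 unfolding x_def by simp
  also have "\<dots> = (real n + 1) / (real n * (x + 1))"
    using x1 by simp
  finally show ?thesis using x2 by simp
qed

lemma bb_a: assumes "1 \<le> i" "i \<le> n"
  shows "(real n - real i + 1) * bb n i = simplex_a n i"
  using assms unfolding bb_def by (simp add: field_simps)

lemma bb_a':
  assumes "1 \<le> i" "i \<le> n"
  shows "real (n + 1 - i) * bb n i = simplex_a n i"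
proof -
  have "real (n + 1 - i) = real n - real i + 1" using assms by (simp add: of_nat_diff)
  then show ?thesis using bb_a[OF assms] by simp
qed

lemma D_form:
  assumes "1 \<le> i" "i \<le> n" "1 \<le> j" "j \<le> n + 1"
  shows "P0_col n j i = (if j < i then 0 else if j = i then simplex_a n i else - bb n i)"
  using assms unfolding P0_col_def bb_def by auto

lemma D_out: "i \<notin> {1..n} \<Longrightarrow> P0_col n j i = 0"
  unfolding P0_col_def by auto

lemma D1: assumes "1 \<le> n" shows "P0_col n 1 = e1"
  using assms a_one[OF assms] unfolding P0_col_def e1_def by (auto simp: fun_eq_iff)

lemma sumG:
  fixes A B :: real
  assumes "1 \<le> i" "i \<le> N"
  shows "(\<Sum>j=1..N. if j < i then 0 else if j = i then A else B) = A + real (N - i) * B"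
  using assms
proof (induction N)
  case 0 then show ?case by simp
next
  case (Suc N)
  show ?case
  proof (cases "i = Suc N")
    case True
    have "(\<Sum>j=1..N. if j < i then 0 else if j = i then A else B) = 0"
      using True by (intro sum.neutral) auto
    then show ?thesis using True by (simp add: sum.cl_ivl_Suc)
  next
    case False
    then have "i \<le> N" using Suc by simp
    then show ?thesis using Suc False by (simp add: sum.cl_ivl_Suc Suc_diff_le algebra_simps)
  qed
qed

lemma sumGv:
  fixes A :: real and n j :: nat
  assumes "1 \<le> j" "j \<le> n + 1"
  shows "(\<Sum>i=1..n. if i < j then X i else if i = j then A else 0) = (\<Sum>i\<in>{1..<j}. X i) + (if j \<le> n then A else 0)"
  using assms
proof (induction n)
  case 0 then show ?case by simp
next
  case (Suc n)
  show ?case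
  proof (cases "j = Suc n + 1")
    case True
    have "(\<Sum>i=1..Suc n. if i < j then X i else if i = j then A else 0) = (\<Sum>i=1..Suc n. X i)"
      using True by (intro sum.cong) auto
    also have "\<dots> = (\<Sum>i\<in>{1..<j}. X i)" using True
      by (metis Suc_eq_plus1 atLeastLessThanSuc_atLeastAtMost)
    finally show ?thesis using True by simp
  next
    case False
    then have "j \<le> n + 1" using Suc by simp
    then show ?thesis using Suc False
      by (auto simp: sum.cl_ivl_Suc atLeastLessThanSuc)
  qed
qed

lemma D_sum0: "(\<Sum>j=1..n+1. P0_col n j i) = 0"
proof (cases "i \<in> {1..n}")
  case False then show ?thesis by (simp add: D_out)
next
  case True
  then have i: "1 \<le> i" "i \<le> n" by auto
  have "(\<Sum>j=1..n+1. P0_col n j i) = (\<Sum>j=1..n+1. if j < i then 0 else if j = i then simplex_a n i else - bb n i)"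
    using i by (intro sum.cong) (auto simp: D_form)
  also have "\<dots> = simplex_a n i + real (n + 1 - i) * (- bb n i)"
    using i by (intro sumG) auto
  also have "\<dots> = 0" using bb_a'[OF i] by simp
  finally show ?thesis .
qed

lemma D_frame_diag:
  assumes r: "1 \<le> r" "r \<le> n"
  shows "(\<Sum>j=1..n+1. P0_col n j r * P0_col n j r) = (real n + 1) / real n"
proof -
  have "(\<Sum>j=1..n+1. P0_col n j r * P0_col n j r) = (\<Sum>j=1..n+1. if j < r then 0 else if j = r then (simplex_a n r)^2 else (bb n r)^2)"
    using r by (intro sum.cong) (auto simp: D_form power2_eq_square)
  also have "\<dots> = (simplex_a n r)^2 + real (n + 1 - r) * (bb n r)^2"
    using r by (intro sumG) auto
  also have "\<dots> = (simplex_a n r)^2 + simplex_a n r * bb n r"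
    using bb_a'[OF r] by (simp add: power2_eq_square)
  also have "\<dots> = (real n + 1) / real n"
  proof -
    define x where "x = real n - real r + 1"
    have x1: "x \<ge> 1" using r unfolding x_def by simp
    have x2: "real n - real r + 2 = x + 1" unfolding x_def by simp
    have np: "real n > 0" using r by simp
    have "(simplex_a n r)^2 + simplex_a n r * bb n r = x * (real n + 1) / (real n * (x + 1)) + (real n + 1) / (real n * (x + 1))"
      using a_sq[OF r] ab[OF r] x2 unfolding x_def by simp
    also have "\<dots> = (x * (real n + 1) + (real n + 1)) / (real n * (x + 1))" by (rule add_divide_distrib[symmetric])
    also have "\<dots> = ((real n + 1) * (x + 1)) / (real n * (x + 1))"
    proof -
      have "x * (real n + 1) + (real n + 1) = (real n + 1) * (x + 1)" by (simp add: algebra_simps)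
      then show ?thesis by simp
    qed
    also have "\<dots> = (real n + 1) / real n" using x1 by (intro nonzero_mult_divide_mult_cancel_right) simp
    finally show ?thesis .
  qed
  finally show ?thesis .
qed

lemma D_frame_off:
  assumes r: "1 \<le> r" "r < s" "s \<le> n"
  shows "(\<Sum>j=1..n+1. P0_col n j r * P0_col n j s) = 0"
proof -
  have s: "1 \<le> s" "s \<le> n" using r by auto
  have r': "1 \<le> r" "r \<le> n" using r by auto
  have "(\<Sum>j=1..n+1. P0_col n j r * P0_col n j s) = (\<Sum>j=1..n+1. if j < s then 0 else if j = s then - bb n r * simplex_a n s else bb n r * bb n s)"
    using r s by (intro sum.cong) (auto simp: D_form)
  also have "\<dots> = - bb n r * simplex_a n s + real (n + 1 - s) * (bb n r * bb n s)"
    using s by (intro sumG) auto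
  also have "\<dots> = 0"
    proof -
    have "real (n + 1 - s) * (bb n r * bb n s) = bb n r * (real (n + 1 - s) * bb n s)" by simp
    then show ?thesis using bb_a'[OF s] by simp
  qed
  finally show ?thesis .
qed

lemma D_frame:
  "(\<Sum>j=1..n+1. P0_col n j r * P0_col n j s) = (if r = s \<and> r \<in> {1..n} then (real n + 1) / real n else 0)"
proof (cases "r \<in> {1..n} \<and> s \<in> {1..n}")
  case False
  then show ?thesis by (auto simp: D_out)
next
  case True
  consider "r = s" | "r < s" | "s < r" by linarith
  then show ?thesis
  proof cases
    case 1 then show ?thesis using True D_frame_diag[of r n] by auto
  next
    case 2 then show ?thesis using True D_frame_off[of r s n] by auto
  next
    case 3 then show ?thesis using True D_frame_off[of s r n] by (auto simp: mult.commute)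
  qed
qed

lemma telescope:
  assumes "1 \<le> j" "j \<le> n + 1"
  shows "(\<Sum>i\<in>{1..<j}. (bb n i)^2) = (real n + 1) / real n * (1 / (real n - real j + 2) - 1 / (real n + 1))"
  using assms
proof (induction j)
  case 0 then show ?case by simp
next
  case (Suc j)
  show ?case
  proof (cases "j = 0")
    case True then show ?thesis by simp
  next
    case False
    then have j: "1 \<le> j" "j \<le> n" using Suc by auto
    have "(\<Sum>i\<in>{1..<Suc j}. (bb n i)^2) = (\<Sum>i\<in>{1..<j}. (bb n i)^2) + (bb n j)^2"
      using j by (simp add: atLeastLessThanSuc)
    also have "\<dots> = (real n + 1) / real n * (1 / (real n - real j + 2) - 1 / (real n + 1)) + (real n + 1) / real n * (1 / (real n - real j + 1) - 1 / (real n - real j + 2))"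
      using Suc.IH j bb_sq[OF j] by simp
    also have "\<dots> = (real n + 1) / real n * (1 / (real n - real (Suc j) + 2) - 1 / (real n + 1))"
      by (simp add: algebra_simps)
    finally show ?thesis .
  qed
qed

lemma H1: fixes m x :: real assumes "m > 0" "x \<ge> 1"
  shows "(m+1)/m*(1/(x+1) - 1/(m+1)) + x*(m+1)/(m*(x+1)) = 1"
proof -
  have a: "x + 1 \<noteq> 0" "m + 1 \<noteq> 0" "m \<noteq> 0" using assms by auto
  have "1/(x+1) - 1/(m+1) = (m - x)/((x+1)*(m+1))" using a by (simp add: field_simps)
  then have "(m+1)/m*(1/(x+1) - 1/(m+1)) = (m - x)/(m*(x+1))" using a by simp
  moreover have "(m - x)/(m*(x+1)) + x*(m+1)/(m*(x+1)) = (m*(x+1))/(m*(x+1))"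
    by (simp add: add_divide_distrib[symmetric] algebra_simps)
  ultimately show ?thesis using a by simp
qed
lemma H2: fixes m x :: real assumes "m > 0" "x \<ge> 1"
  shows "(m+1)/m*(1/(x+1) - 1/(m+1)) - (m+1)/(m*(x+1)) = -1/m"
proof -
  have a: "x + 1 \<noteq> 0" "m + 1 \<noteq> 0" "m \<noteq> 0" using assms by auto
  have "1/(x+1) - 1/(m+1) = (m - x)/((x+1)*(m+1))" using a by (simp add: field_simps)
  then have "(m+1)/m*(1/(x+1) - 1/(m+1)) = (m - x)/(m*(x+1))" using a by simp
  moreover have "(m - x)/(m*(x+1)) - (m+1)/(m*(x+1)) = -1/m"
  proof -
    have "(m - x)/(m*(x+1)) - (m+1)/(m*(x+1)) = (m - x - (m+1))/(m*(x+1))" by (rule diff_divide_distrib[symmetric])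
    also have "m - x - (m+1) = (-1) * (x+1)" by simp
    also have "(-1) * (x+1)/(m*(x+1)) = -1/m" using a nonzero_mult_divide_mult_cancel_right[of "x+1" "-1" m] by simp
    finally show ?thesis .
  qed
  ultimately show ?thesis by simp
qed

lemma D_gram_le:
  assumes jk: "1 \<le> j" "j \<le> k" "k \<le> n + 1" and n1: "1 \<le> n"
  shows "vinner n (P0_col n j) (P0_col n k) = (if j = k then 1 else - 1 / real n)"
proof -
  have np: "real n > 0" using n1 by simp
  have "vinner n (P0_col n j) (P0_col n k) = (\<Sum>i=1..n. if i < j then (bb n i)^2 else if i = j then (if j = k then (simplex_a n j)^2 else - (simplex_a n j * bb n j)) else 0)"
    unfolding vinner_def using jk by (intro sum.cong) (auto simp: D_form power2_eq_square)
  also have "\<dots> = (\<Sum>i\<in>{1..<j}. (bb n i)^2) + (if j \<le> n then (if j = k then (simplex_a n j)^2 else - (simplex_a n j * bb n j)) else 0)"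
    using jk by (intro sumGv) auto
  also have "\<dots> = (if j = k then 1 else - 1 / real n)"
  proof (cases "j \<le> n")
    case True
    define x where "x = real n - real j + 1"
    have x1: "x \<ge> 1" using True unfolding x_def by simp
    have x2: "real n - real j + 2 = x + 1" unfolding x_def by simp
    have T: "(\<Sum>i\<in>{1..<j}. (bb n i)^2) = (real n + 1) / real n * (1 / (x + 1) - 1 / (real n + 1))"
      using telescope[of j n] jk x2 by simp
    have j': "1 \<le> j" "j \<le> n" using jk True by auto
    show ?thesis
    proof (cases "j = k")
      case True
      have A: "(simplex_a n j)^2 = x * (real n + 1) / (real n * (x + 1))" using a_sq[OF j'] x2 unfolding x_def by simp
      show ?thesis using T A True \<open>j \<le> n\<close> H1[OF np x1] by simp
    next
      case False
      have A: "simplex_a n j * bb n j = (real n + 1) / (real n * (x + 1))" using ab[OF j'] x2 by simp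
      show ?thesis using T A False \<open>j \<le> n\<close> H2[OF np x1] by simp
    qed
  next
    case False
    then have "j = n + 1" "k = n + 1" using jk by auto
    moreover have "real n + real n * real n > 0" using np by (simp add: add_pos_pos)
    ultimately show ?thesis using telescope[of j n] np by (simp add: field_simps)
  qed
  finally show ?thesis .
qed

lemma D_gram:
  assumes "j \<in> {1..n+1}" "k \<in> {1..n+1}" "1 \<le> n"
  shows "vinner n (P0_col n j) (P0_col n k) = (if j = k then 1 else - 1 / real n)"
proof (cases "j \<le> k")
  case True then show ?thesis using assms D_gram_le by auto
next
  case False
  have "vinner n (P0_col n j) (P0_col n k) = vinner n (P0_col n k) (P0_col n j)"
    unfolding vinner_def by (simp add: mult.commute)
  then show ?thesis using assms D_gram_le[of k j n] False by auto
qed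

lemma vinner_comm: "vinner n x y = vinner n y x"
  unfolding vinner_def by (simp add: mult.commute)

lemma vinner_lin2: "vinner n x (\<lambda>i. a * (y i + b * z i)) = a * (vinner n x y + b * vinner n x z)"
  unfolding vinner_def by (simp add: sum_distrib_left sum.distrib algebra_simps)

lemma vinner_neg2: "vinner n x (\<lambda>i. - y i) = - vinner n x y"
  unfolding vinner_def by (simp add: sum_negf)

lemma vinner_sum2: "vinner n v (\<lambda>r. \<Sum>d\<in>S. l d * d r) = (\<Sum>d\<in>S. l d * vinner n v d)"
  unfolding vinner_def by (simp add: sum_distrib_left sum.swap[of _ S] algebra_simps)

lemma vnorm_eq: "vnorm n x = sqrt (vinner n x x)"
  unfolding vnorm_def vinner_def by (simp add: power2_eq_square)

lemma pos_comb:
  assumes "inj_on p I" "finite I" "\<forall>j\<in>I. lam j \<ge> 0" "x = (\<lambda>r. \<Sum>j\<in>I. lam j * p j r)"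
  shows "x \<in> pos_span (p ` I)"
proof -
  define l where "l d = lam (the_inv_into I p d)" for d
  have "x = (\<lambda>r. \<Sum>d\<in>p ` I. l d * d r)"
    unfolding assms(4) l_def using assms(1)
    by (simp add: sum.reindex the_inv_into_f_f)
  moreover have "\<forall>d\<in>p ` I. l d \<ge> 0" unfolding l_def using assms(1,3) by (auto simp: the_inv_into_f_f)
  ultimately show ?thesis unfolding pos_span_def by blast
qed

locale pd =
  fixes n :: nat and \<delta> :: real
  assumes n2: "n \<ge> 2" and d0: "0 \<le> \<delta>" and d1: "\<delta> < 1 / real n"
begin

abbreviation "D \<equiv> P0_col n"
abbreviation "p \<equiv> Pdelta_col n \<delta>"
abbreviation "\<alpha> \<equiv> Pdelta_alpha n \<delta>"
abbreviation "Q \<equiv> real n ^ 2 * \<delta>^2 - 2 * real n * \<delta> + real n ^ 2"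

lemma np: "real n > 0" using n2 by simp
lemma n1: "1 \<le> n" using n2 by simp
lemma nd: "real n * \<delta> < 1" using d1 np by (simp add: field_simps)

lemma Q_eq: "Q = (real n * \<delta> - 1)^2 + (real n ^ 2 - 1)"
  by (simp add: power2_eq_square algebra_simps)

lemma Q_pos: "Q > 0"
proof -
  have "real n \<ge> 2" using n2 by simp
  then have "real n ^ 2 \<ge> 2 ^ 2" by (intro power_mono) auto
  then have "real n ^ 2 \<ge> 4" by simp
  moreover have "(real n * \<delta> - 1)^2 \<ge> 0" by simp
  ultimately show ?thesis unfolding Q_eq by linarith
qed

lemma alpha_pos: "\<alpha> > 0"
  unfolding Pdelta_alpha_def using Q_pos np by simp

lemma alpha_sq: "\<alpha>^2 = real n ^ 2 / Q"
  unfolding Pdelta_alpha_def using Q_pos by (simp add: power_divide)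

lemma p1: "p 1 = D 1" unfolding Pdelta_col_def by simp

lemma pj: "j \<noteq> 1 \<Longrightarrow> p j = (\<lambda>i. \<alpha> * (D j i + \<delta> * D 1 i))"
  unfolding Pdelta_col_def using D1[OF n1] by simp

lemma gram: "j \<in> {1..n+1} \<Longrightarrow> k \<in> {1..n+1} \<Longrightarrow> vinner n (D j) (D k) = (if j = k then 1 else - 1 / real n)"
  using D_gram n1 by blast

lemma Dk_p:
  assumes k: "k \<in> {1..n+1}" and j: "j \<in> {1..n+1}"
  shows "vinner n (D k) (p j) = (if j = 1 then vinner n (D k) (D 1) else \<alpha> * (vinner n (D k) (D j) + \<delta> * vinner n (D k) (D 1)))"
  using pj vinner_lin2 p1 by simp

lemma Dk_pos: "k \<in> {1..n+1} \<Longrightarrow> vinner n (D k) (p k) > 0"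
proof -
  assume k: "k \<in> {1..n+1}"
  have one: "(1::nat) \<in> {1..n+1}" by simp
  show ?thesis
  proof (cases "k = 1")
    case True then show ?thesis using Dk_p[OF k k] gram[OF k k] by simp
  next
    case False
    have "\<delta> / real n < 1" proof -
      have "1 / real n \<le> 1" using n1 by simp
      then have "\<delta> < 1" using d1 by linarith
      then show ?thesis using np n1 by (simp add: divide_less_eq)
    qed
    then have "0 < 1 + \<delta> * (- 1 / real n)" by simp
    then show ?thesis using Dk_p[OF k k] gram[OF k k] gram[OF k one] False alpha_pos by simp
  qed
qed

lemma Dk_neg: "k \<in> {1..n+1} \<Longrightarrow> j \<in> {1..n+1} \<Longrightarrow> j \<noteq> k \<Longrightarrow> vinner n (D k) (p j) < 0"
proof -
  assume k: "k \<in> {1..n+1}" and j: "j \<in> {1..n+1}" and jk: "j \<noteq> k"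
  have one: "(1::nat) \<in> {1..n+1}" by simp
  show ?thesis
  proof (cases "j = 1")
    case True then show ?thesis using Dk_p[OF k j] gram[OF k j] jk np by simp
  next
    case False
    show ?thesis
    proof (cases "k = 1")
      case True
      have "- 1 / real n + \<delta> < 0" using d1 by simp
      then show ?thesis using Dk_p[OF k j] gram[OF k j] gram[OF k one] True False alpha_pos
        by (simp add: mult_pos_neg)
    next
      case k1: False
      have "- 1 / real n + \<delta> * (- 1 / real n) < 0" using d0 np
        by (simp add: field_simps)
      then show ?thesis using Dk_p[OF k j] gram[OF k j] gram[OF k one] k1 False jk alpha_pos
        by (simp add: mult_pos_neg)
    qed
  qed
qed

lemma p_inj: "inj_on p {1..n+1}"
proof (rule inj_onI)
  fix j k assume j: "j \<in> {1..n+1}" and k: "k \<in> {1..n+1}" and e: "p j = p k"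
  show "j = k"
  proof (rule ccontr)
    assume "j \<noteq> k"
    then have "vinner n (D k) (p j) < 0" using Dk_neg[OF k j] by simp
    moreover have "vinner n (D k) (p k) > 0" using Dk_pos[OF k] .
    ultimately show False using e by simp
  qed
qed

lemma p_Rn: "p j \<in> Rn n"
  unfolding Rn_def
proof (intro CollectI allI impI)
  fix i assume "i \<notin> {1..n}"
  then show "p j i = 0" using D_out[of i n] pj[of j] p1 by (cases "j = 1") auto
qed

lemma p_norm: "j \<in> {1..n+1} \<Longrightarrow> vnorm n (p j) = 1"
proof -
  assume j: "j \<in> {1..n+1}"
  have one: "(1::nat) \<in> {1..n+1}" by simp
  show ?thesis
  proof (cases "j = 1")
    case True
    then have "p j = D 1" using p1 by simp
    then show ?thesis using gram[OF one one] by (simp add: vnorm_eq)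
  next
    case False
    have "vinner n (p j) (p j) = \<alpha> * (vinner n (p j) (D j) + \<delta> * vinner n (p j) (D 1))"
      using pj[OF False] vinner_lin2 by (metis (no_types))
    also have "vinner n (p j) (D j) = \<alpha> * (1 + \<delta> * (- 1 / real n))"
      using vinner_comm Dk_p[OF j j] gram[OF j j] gram[OF j one] False by simp
    also have "vinner n (p j) (D 1) = \<alpha> * (- 1 / real n + \<delta>)"
      using vinner_comm Dk_p[OF one j] gram[OF one j] gram[OF one one] False by (simp add: vinner_comm)
    also have "\<alpha> * (\<alpha> * (1 + \<delta> * (- 1 / real n)) + \<delta> * (\<alpha> * (- 1 / real n + \<delta>))) = \<alpha>^2 * (Q / real n ^ 2)"
      using np by (simp add: field_simps power2_eq_square)
    also have "\<dots> = 1" using alpha_sq Q_pos np by simp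
    finally show ?thesis by (simp add: vnorm_eq)
  qed
qed

lemma frame:
  assumes x: "x \<in> Rn n"
  shows "(\<Sum>j\<in>{1..n+1}. vinner n x (D j) * D j r) = (real n + 1) / real n * x r"
proof -
  have "(\<Sum>j\<in>{1..n+1}. vinner n x (D j) * D j r) = (\<Sum>j\<in>{1..n+1}. \<Sum>s=1..n. x s * (D j s * D j r))"
    by (simp add: vinner_def sum_distrib_right mult.assoc)
  also have "\<dots> = (\<Sum>s=1..n. \<Sum>j\<in>{1..n+1}. x s * (D j s * D j r))"
    by (rule sum.swap)
  also have "\<dots> = (\<Sum>s=1..n. x s * (\<Sum>j\<in>{1..n+1}. D j s * D j r))"
    by (simp only: sum_distrib_left)
  also have "\<dots> = (\<Sum>s=1..n. if s = r then x s * ((real n + 1) / real n) else 0)"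
    by (rule sum.cong[OF refl]) (simp only: D_frame, simp)
  also have "\<dots> = (real n + 1) / real n * x r"
    using x unfolding Rn_def by (auto simp: sum.delta)
  finally show ?thesis .
qed

lemma I_split: "(\<Sum>j\<in>{1..n+1}. f j) = f 1 + (\<Sum>j\<in>{2..n+1}. (f j :: real))"
proof -
  have "{1..n+1} = insert 1 {2..n+1}" by auto
  then show ?thesis by simp
qed

lemma card_S2: "card {2..n+1} = n" by simp

lemma dep: "(\<Sum>j\<in>{1..n+1}. (if j = 1 then \<alpha> * (1 - real n * \<delta>) else 1) * p j r) = 0"
proof -
  have "(\<Sum>j\<in>{2..n+1}. (if j = 1 then \<alpha> * (1 - real n * \<delta>) else 1) * p j r)
      = (\<Sum>j\<in>{2..n+1}. \<alpha> * D j r + \<alpha> * \<delta> * D 1 r)"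
    by (intro sum.cong refl) (auto simp: pj algebra_simps)
  also have "\<dots> = \<alpha> * (\<Sum>j\<in>{2..n+1}. D j r) + real n * (\<alpha> * \<delta> * D 1 r)"
    by (simp only: sum.distrib sum_distrib_left[symmetric] sum_constant card_S2) (simp add: algebra_simps)
  finally have h: "(\<Sum>j\<in>{2..n+1}. (if j = 1 then \<alpha> * (1 - real n * \<delta>) else 1) * p j r) = \<alpha> * (\<Sum>j\<in>{2..n+1}. D j r) + real n * (\<alpha> * \<delta> * D 1 r)" .
  have z: "D 1 r + (\<Sum>j\<in>{2..n+1}. D j r) = 0" using D_sum0[of n r] I_split[of "\<lambda>j. D j r"] by simp
  have "(\<Sum>j\<in>{1..n+1}. (if j = 1 then \<alpha> * (1 - real n * \<delta>) else 1) * p j r)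
     = \<alpha> * (1 - real n * \<delta>) * D 1 r + (\<alpha> * (\<Sum>j\<in>{2..n+1}. D j r) + real n * (\<alpha> * \<delta> * D 1 r))"
    by (subst I_split) (simp only: h p1 refl if_True)
  also have "\<dots> = \<alpha> * (D 1 r + (\<Sum>j\<in>{2..n+1}. D j r))" by (simp add: algebra_simps)
  also have "\<dots> = 0" using z by simp
  finally show ?thesis .
qed

lemma span:
  assumes x: "x \<in> Rn n"
  shows "x \<in> pos_span (p ` {1..n+1})"
proof -
  define C where "C = (real n + 1) / real n"
  have C0: "C > 0" unfolding C_def using np by simp
  define cc where "cc j = vinner n x (D j)" for j
  define B where "B = (\<Sum>j\<in>{2..n+1}. cc j)"
  define mu where "mu j = (if j = 1 then (cc 1 - \<delta> * B) / C else cc j / (C * \<alpha>))" for j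
  define w where "w j = (if j = 1 then \<alpha> * (1 - real n * \<delta>) else 1)" for j :: nat
  have wpos: "w j > 0" for j unfolding w_def using alpha_pos nd by simp
  have rep: "(\<Sum>j\<in>{1..n+1}. mu j * p j r) = x r" for r
  proof -
    define A where "A = (\<Sum>j\<in>{2..n+1}. cc j * D j r)"
    have h1: "(\<Sum>j\<in>{2..n+1}. mu j * p j r) = (\<Sum>j\<in>{2..n+1}. (cc j * D j r + \<delta> * D 1 r * cc j) / C)"
      using alpha_pos C0 by (intro sum.cong refl) (auto simp: mu_def pj field_simps)
    also have "\<dots> = (\<Sum>j\<in>{2..n+1}. cc j * D j r + \<delta> * D 1 r * cc j) / C"
      by (rule sum_divide_distrib[symmetric])
    also have "\<dots> = (A + \<delta> * D 1 r * B) / C"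
      unfolding A_def B_def by (simp only: sum.distrib sum_distrib_left)
    finally have h1: "(\<Sum>j\<in>{2..n+1}. mu j * p j r) = (A + \<delta> * D 1 r * B) / C" .
    have h2: "cc 1 * D 1 r + A = C * x r"
      using frame[OF x, of r] I_split[of "\<lambda>j. cc j * D j r"] unfolding A_def C_def cc_def by simp
    have "(\<Sum>j\<in>{1..n+1}. mu j * p j r) = mu 1 * D 1 r + (A + \<delta> * D 1 r * B) / C"
      using I_split[of "\<lambda>j. mu j * p j r"] h1 p1 by simp
    also have "\<dots> = (cc 1 * D 1 r + A) / C" unfolding mu_def using C0 by (simp add: field_simps)
    also have "\<dots> = x r" using h2 C0 by simp
    finally show ?thesis .
  qed
  define t where "t = (\<Sum>j\<in>{1..n+1}. \<bar>mu j\<bar> / w j)"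
  define lam where "lam j = mu j + t * w j" for j
  have lam_nn: "\<forall>j\<in>{1..n+1}. lam j \<ge> 0"
  proof
    fix j assume j: "j \<in> {1..n+1}"
    have "\<bar>mu j\<bar> / w j \<le> t" unfolding t_def
      by (rule member_le_sum[OF j]) (auto intro!: divide_nonneg_pos wpos)
    then have "\<bar>mu j\<bar> \<le> t * w j" using wpos[of j] by (simp add: divide_le_eq)
    then show "lam j \<ge> 0" unfolding lam_def by linarith
  qed
  have "x = (\<lambda>r. \<Sum>j\<in>{1..n+1}. lam j * p j r)"
  proof
    fix r
    have "(\<Sum>j\<in>{1..n+1}. lam j * p j r) = (\<Sum>j\<in>{1..n+1}. mu j * p j r) + t * (\<Sum>j\<in>{1..n+1}. w j * p j r)"
      unfolding lam_def by (simp add: algebra_simps sum.distrib sum_distrib_left)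
    also have "\<dots> = x r" using rep dep unfolding w_def by simp
    finally show "x r = (\<Sum>j\<in>{1..n+1}. lam j * p j r)" by simp
  qed
  then show ?thesis using pos_comb[OF p_inj _ lam_nn] by simp
qed

lemma posbasis: "positive_basis n (p ` {1..n+1})"
  unfolding positive_basis_def
proof (intro conjI ballI)
  show "finite (p ` {1..n+1})" by simp
  show "pos_span (p ` {1..n+1}) = Rn n"
  proof
    show "Rn n \<subseteq> pos_span (p ` {1..n+1})" using span by blast
    show "pos_span (p ` {1..n+1}) \<subseteq> Rn n"
    proof
      fix x assume "x \<in> pos_span (p ` {1..n+1})"
      then obtain l where x: "x = (\<lambda>i. \<Sum>d\<in>p ` {1..n+1}. l d * d i)" unfolding pos_span_def by blast
      show "x \<in> Rn n" unfolding Rn_def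
      proof (intro CollectI allI impI)
        fix i assume i: "i \<notin> {1..n}"
        have "\<forall>d\<in>p ` {1..n+1}. d i = 0" using p_Rn i unfolding Rn_def by blast
        then show "x i = 0" unfolding x by (intro sum.neutral) auto
      qed
    qed
  qed
next
  fix d assume "d \<in> p ` {1..n+1}"
  then obtain k where k: "k \<in> {1..n+1}" and dk: "d = p k" by blast
  show "d \<notin> pos_span (p ` {1..n+1} - {d})"
  proof
    assume "d \<in> pos_span (p ` {1..n+1} - {d})"
    then obtain l where l: "\<forall>e\<in>p ` {1..n+1} - {d}. l e \<ge> 0"
      and x: "d = (\<lambda>i. \<Sum>e\<in>p ` {1..n+1} - {d}. l e * e i)" unfolding pos_span_def by blast
    have "vinner n (D k) d = (\<Sum>e\<in>p ` {1..n+1} - {d}. l e * vinner n (D k) e)"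
      by (subst x) (rule vinner_sum2)
    also have "\<dots> \<le> 0"
    proof (rule sum_nonpos)
      fix e assume e: "e \<in> p ` {1..n+1} - {d}"
      then obtain j where j: "j \<in> {1..n+1}" and ej: "e = p j" and "j \<noteq> k" using dk by blast
      then have "vinner n (D k) e < 0" using Dk_neg[OF k j] by simp
      then show "l e * vinner n (D k) e \<le> 0" using l e by (simp add: mult_nonneg_nonpos)
    qed
    finally show False using Dk_pos[OF k] dk by simp
  qed
qed

lemma s_sum0: "(\<Sum>j\<in>{1..n+1}. vinner n (D j) u) = 0"
proof -
  have "(\<Sum>j\<in>{1..n+1}. vinner n (D j) u) = (\<Sum>j\<in>{1..n+1}. \<Sum>i=1..n. D j i * u i)"
    unfolding vinner_def by simp
  also have "\<dots> = (\<Sum>i=1..n. \<Sum>j\<in>{1..n+1}. D j i * u i)" by (rule sum.swap)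
  also have "\<dots> = (\<Sum>i=1..n. (\<Sum>j\<in>{1..n+1}. D j i) * u i)" by (simp only: sum_distrib_right)
  also have "\<dots> = 0" by (simp only: D_sum0) simp
  finally show ?thesis .
qed

lemma unorm: "vnorm n u = 1 \<Longrightarrow> vinner n u u = 1"
  by (simp add: vnorm_eq)

lemma s_sq:
  assumes u: "u \<in> Rn n" "vnorm n u = 1"
  shows "(\<Sum>j\<in>{1..n+1}. (vinner n (D j) u)^2) = (real n + 1) / real n"
proof -
  have "(\<Sum>j\<in>{1..n+1}. (vinner n (D j) u)^2) = (\<Sum>j\<in>{1..n+1}. vinner n u (D j) * (\<Sum>r=1..n. D j r * u r))"
    by (simp add: power2_eq_square vinner_comm[of n u] vinner_def[of n "D _" u])
  also have "\<dots> = (\<Sum>j\<in>{1..n+1}. \<Sum>r=1..n. u r * (vinner n u (D j) * D j r))"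
    by (simp add: sum_distrib_left mult_ac)
  also have "\<dots> = (\<Sum>r=1..n. \<Sum>j\<in>{1..n+1}. u r * (vinner n u (D j) * D j r))" by (rule sum.swap)
  also have "\<dots> = (\<Sum>r=1..n. u r * ((real n + 1) / real n * u r))"
    by (simp only: sum_distrib_left[symmetric] frame[OF u(1)])
  also have "\<dots> = (real n + 1) / real n * vinner n u u"
    unfolding vinner_def by (simp add: sum_distrib_left mult_ac)
  finally show ?thesis using unorm[OF u(2)] by simp
qed

lemma s_ge:
  assumes j: "j \<in> {1..n+1}" and u: "vnorm n u = 1"
  shows "vinner n (D j) u \<ge> -1"
proof -
  have "0 \<le> (\<Sum>i=1..n. (D j i + u i)^2)" by (simp add: sum_nonneg)
  also have "\<dots> = vinner n (D j) (D j) + 2 * vinner n (D j) u + vinner n u u"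
    unfolding vinner_def by (simp add: power2_eq_square algebra_simps sum.distrib sum_distrib_left)
  finally show ?thesis using gram[OF j j] unorm[OF u] by simp
qed

lemma p_u1: "vinner n (p 1) u = vinner n (D 1) u" by (subst p1) (rule refl)

lemma p_uj: "j \<noteq> 1 \<Longrightarrow> vinner n (p j) u = \<alpha> * (vinner n (D j) u + \<delta> * vinner n (D 1) u)"
  using pj[of j] vinner_lin2[of n u \<alpha> "D j" \<delta> "D 1"] vinner_comm by (metis (no_types))

definition "mm = (1 - \<delta> * real n) / sqrt Q"

lemma mm_alt: "mm = \<alpha> * (1 / real n - \<delta>)"
  unfolding mm_def Pdelta_alpha_def using np Q_pos by (simp add: field_simps)

lemma mm_nonneg: "mm \<ge> 0"
  unfolding mm_alt using alpha_pos d1 by simp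

lemma mm_le: "mm \<le> 1 / real n"
proof -
  have k: "(real n * (1 - real n * \<delta>))^2 \<le> Q"
  proof -
    have "Q - (real n * (1 - real n * \<delta>))^2 = (real n ^ 2 - 1) * (real n * \<delta>) * (2 - real n * \<delta>)"
      by (simp add: power2_eq_square algebra_simps)
    moreover have "real n ^ 2 - 1 \<ge> 0" using n1 by (simp add: one_le_power)
    moreover have "real n * \<delta> \<ge> 0" using d0 by simp
    moreover have "2 - real n * \<delta> \<ge> 0" using nd by simp
    ultimately have "Q - (real n * (1 - real n * \<delta>))^2 \<ge> 0" by simp
    then show ?thesis by linarith
  qed
  have "real n * (1 - real n * \<delta>) \<le> sqrt Q"
    using k by (simp add: real_le_rsqrt)
  then have "real n * (1 - real n * \<delta>) / sqrt Q \<le> 1" using Q_pos by simp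
  then show ?thesis unfolding mm_def using np by (simp add: field_simps)
qed

lemma LB:
  assumes u: "u \<in> Rn n" "vnorm n u = 1"
  shows "\<exists>j\<in>{1..n+1}. vinner n (p j) u \<ge> mm"
proof (rule ccontr)
  assume "\<not> ?thesis"
  then have lt: "\<forall>j\<in>{1..n+1}. vinner n (p j) u < mm" by auto
  define s where "s j = vinner n (D j) u" for j
  define T where "T = 1 / real n - \<delta> - \<delta> * s 1"
  have one: "(1::nat) \<in> {1..n+1}" by simp
  have "vinner n (p 1) u < mm" using lt one by blast
  then have s1: "s 1 < mm" using p_u1 unfolding s_def by simp
  have s1': "s 1 < 1 / real n" using s1 mm_le by simp
  have sj: "s j < T" if j: "j \<in> {2..n+1}" for j
  proof -
    have jj: "j \<in> {1..n+1}" "j \<noteq> 1" using j by auto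
    then have "vinner n (p j) u < mm" using lt by blast
    then have "\<alpha> * (s j + \<delta> * s 1) < \<alpha> * (1 / real n - \<delta>)"
      using p_uj[OF jj(2), of u] mm_alt unfolding s_def by simp
    then have "s j + \<delta> * s 1 < 1 / real n - \<delta>" using alpha_pos by simp
    then show ?thesis unfolding T_def by simp
  qed
  have sg: "s j \<ge> -1" if "j \<in> {2..n+1}" for j
    using s_ge[OF _ u(2), of j] that unfolding s_def by auto
  have S1: "(\<Sum>j\<in>{2..n+1}. s j) = - s 1"
    using s_sum0[of u] I_split[of s] unfolding s_def by simp
  have S2: "(\<Sum>j\<in>{2..n+1}. (s j)^2) = (real n + 1) / real n - (s 1)^2"
    using s_sq[OF u] I_split[of "\<lambda>j. (s j)^2"] unfolding s_def by simp
  have "0 \<le> (\<Sum>j\<in>{2..n+1}. (T - s j) * (s j + 1))"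
  proof (intro sum_nonneg mult_nonneg_nonneg)
    fix j assume j: "j \<in> {2..n+1}"
    show "0 \<le> T - s j" using sj[OF j] by simp
    show "0 \<le> s j + 1" using sg[OF j] by simp
  qed
  also have "\<dots> = (\<Sum>j\<in>{2..n+1}. T * s j + T - (s j)^2 - s j)"
    by (simp add: power2_eq_square algebra_simps)
  also have "\<dots> = T * (\<Sum>j\<in>{2..n+1}. s j) + real n * T - (\<Sum>j\<in>{2..n+1}. (s j)^2) - (\<Sum>j\<in>{2..n+1}. s j)"
    by (simp only: sum.distrib sum_subtractf sum_distrib_left sum_constant card_S2)
  also have "\<dots> = T * (- s 1) + real n * T - ((real n + 1) / real n - (s 1)^2) + s 1"
    using S1 S2 by simp
  also have "\<dots> = - (1 + s 1) * (1 / real n + \<delta> * real n - s 1 * (1 + \<delta>))"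
    unfolding T_def using np by (simp add: field_simps power2_eq_square)
  finally have G: "0 \<le> - (1 + s 1) * (1 / real n + \<delta> * real n - s 1 * (1 + \<delta>))" .
  have "s 1 * (1 + \<delta>) < 1 / real n * (1 + \<delta>)" using s1' d0 by (intro mult_strict_right_mono) auto
  moreover have "\<delta> / real n \<le> \<delta> * real n"
  proof -
    have "1 / real n \<le> 1" using n1 by simp
    moreover have "1 \<le> real n" using n1 by simp
    ultimately have "1 / real n \<le> real n" by linarith
    then have "\<delta> * (1 / real n) \<le> \<delta> * real n" using d0 by (rule mult_left_mono)
    then show ?thesis by simp
  qed
  moreover have "1 / real n * (1 + \<delta>) = 1 / real n + \<delta> / real n" by (simp add: ring_distribs)
  ultimately have B: "1 / real n + \<delta> * real n - s 1 * (1 + \<delta>) > 0" by linarith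
  have "1 + s 1 \<le> 0"
  proof (rule ccontr)
    assume "\<not> 1 + s 1 \<le> 0"
    then have "(1 + s 1) * (1 / real n + \<delta> * real n - s 1 * (1 + \<delta>)) > 0" using B by simp
    then show False using G minus_mult_left[of "1 + s 1" "1 / real n + \<delta> * real n - s 1 * (1 + \<delta>)"] by linarith
  qed
  moreover have "s 1 \<ge> -1" using s_ge[OF one u(2)] unfolding s_def by simp
  ultimately have sm1: "s 1 = -1" by simp
  then have "T = 1 / real n" unfolding T_def by simp
  have "(\<Sum>j\<in>{2..n+1}. s j) < (\<Sum>j\<in>{2..n+1}. T)"
    using sj n1 by (intro sum_strict_mono) auto
  also have "\<dots> = 1" using \<open>T = 1 / real n\<close> np by simp
  finally show False using S1 sm1 by simp
qed

lemma cm: "cosine_measure n (p ` {1..n+1}) = mm"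
proof -
  define g where "g u = Max ((\<lambda>d. vinner n d u / vnorm n d) ` (p ` {1..n+1}))" for u
  have fin: "finite ((\<lambda>d. vinner n d u / vnorm n d) ` (p ` {1..n+1}))" for u by simp
  have elem: "vinner n (p j) u \<in> (\<lambda>d. vinner n d u / vnorm n d) ` (p ` {1..n+1})" if j: "j \<in> {1..n+1}" for j u
  proof -
    have "vinner n (p j) u = (\<lambda>d. vinner n d u / vnorm n d) (p j)" using p_norm[OF j] by simp
    then show ?thesis using j by blast
  qed
  have lower: "g u \<ge> mm" if u: "u \<in> Rn n" "vnorm n u = 1" for u
  proof -
    obtain j where j: "j \<in> {1..n+1}" and jm: "vinner n (p j) u \<ge> mm" using LB[OF u] by blast
    have "vinner n (p j) u \<le> g u" unfolding g_def by (rule Max_ge[OF fin elem[OF j]])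
    then show ?thesis using jm by simp
  qed
  define u0 where "u0 = (\<lambda>i. - D 1 i)"
  have one: "(1::nat) \<in> {1..n+1}" by simp
  have u0R: "u0 \<in> Rn n" unfolding Rn_def u0_def using D_out by auto
  have u0n: "vnorm n u0 = 1"
  proof -
    have "vinner n u0 u0 = vinner n (D 1) (D 1)" unfolding vinner_def u0_def by simp
    then show ?thesis using gram[OF one one] by (simp add: vnorm_eq)
  qed
  have vD: "vinner n (D j) u0 = - vinner n (D j) (D 1)" for j unfolding u0_def by (rule vinner_neg2)
  have g0: "g u0 = mm" unfolding g_def
  proof (rule Max_eqI[OF fin])
    show "mm \<in> (\<lambda>d. vinner n d u0 / vnorm n d) ` (p ` {1..n+1})"
    proof -
      have two: "(2::nat) \<in> {1..n+1}" using n1 by simp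
      have "vinner n (p 2) u0 = mm"
        using p_uj[of 2 u0] vD gram[OF two one] gram[OF one one] mm_alt by simp
      then show ?thesis using elem[OF two, of u0] by simp
    qed
  next
    fix y assume "y \<in> (\<lambda>d. vinner n d u0 / vnorm n d) ` (p ` {1..n+1})"
    then obtain j where j: "j \<in> {1..n+1}" and y: "y = vinner n (p j) u0 / vnorm n (p j)" by blast
    then have y': "y = vinner n (p j) u0" using p_norm[OF j] by simp
    show "y \<le> mm"
    proof (cases "j = 1")
      case True
      then have "y = -1" using y' p_u1[of u0] vD gram[OF one one] by simp
      then show ?thesis using mm_nonneg by simp
    next
      case False
      then have "y = mm" using y' p_uj[OF False, of u0] vD gram[OF j one] gram[OF one one] mm_alt by simp
      then show ?thesis by simp
    qed
  qed
  have "Inf (g ` {u \<in> Rn n. vnorm n u = 1}) = mm"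
  proof (rule cInf_eq_minimum)
    show "mm \<in> g ` {u \<in> Rn n. vnorm n u = 1}" using g0 u0R u0n by force
    fix y assume "y \<in> g ` {u \<in> Rn n. vnorm n u = 1}"
    then show "mm \<le> y" using lower by auto
  qed
  then show ?thesis unfolding cosine_measure_def g_def by simp
qed

end

theorem theorem13:
  fixes n :: nat and \<delta> :: real
  assumes "n \<ge> 2" and "0 \<le> \<delta>" and "\<delta> < 1 / real n"
  shows "positive_basis n (Pdelta_col n \<delta> ` {1..n+1}) \<and>
         cosine_measure n (Pdelta_col n \<delta> ` {1..n+1}) =
           (1 - \<delta> * real n) / sqrt (real n ^ 2 * \<delta>^2 - 2 * real n * \<delta> + real n ^ 2)"
proof -
  interpret pd n \<delta> using assms by unfold_locales
  show ?thesis using posbasis cm unfolding mm_def by simp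
qed

end
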